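(* Let $\phi\in\mathrm{QJac}_{k,L}$ be such that $\mathsf T_\lambda\phi = 0$ for all $\lambda\in\mathbb Z^n$. Then for all $\begin{pmatrix}a&b\\c&d\end{pmatrix}\in SL_2(\mathbb Z)$, \[ \phi\left(\frac z{c\tau+d},\frac{a\tau+b}{c\tau+d}\right) = e\left(\frac{c\,z^TLz}{c\tau+d}\right)\sum_{\ell\ge0}\frac1{\ell!}\left(-\frac c{4\pi i}\right)^\ell(c\tau+d)^{k-\ell}\,\mathsf T_q^\ell\phi(z,\tau). \]
   Context: Notation: $e(x) = \exp(2\pi ix)$, $q = e(\tau)$, $\tau\in\mathbb H$, $z\in\mathbb C^n$; $L$ is a rational symmetric $n\times n$ matrix with $2L$ integral with even diagonal. Let $\nu = 1/(8\pi\mathrm{Im}\tau)$ and $\alpha_i = \mathrm{Im}z_i/\mathrm{Im}\tau$. An almost holomorphic weak Jacobi form of weight $k$ and index $L$ is a finite sum $\Phi = \sum_{i,j}\phi_{i,j}(z,\tau)\nu^i\alpha^j$ ($j\in\mathbb Z_{\ge0}^n$), each $\phi_{i,j}$ holomorphic with Fourier expansion $\sum_{m\ge0}\sum_{r\in\mathbb Z^n}c(m,r)q^me(z\cdot r)$ in $|q|<1$, satisfying $\Phi(\frac z{c\tau+d},\frac{a\tau+b}{c\tau+d}) = (c\tau+d)^ke(\frac{cz^TLz}{c\tau+d})\Phi(z,\tau)$ for all $\begin{pmatrix} a&b\\c&d\end{pmatrix}\in SL_2(\mathbb Z)$ and $\Phi(z+\lambda\tau+\mu,\tau) = e(-\lambda^TL\lambda\tau-2\lambda^TLz)\Phi(z,\tau)$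 for $\lambda,\mu\in\mathbb Z^n$. A quasi-Jacobi form of weight $k$ and index $L$ is $\phi = \phi_{0,0}$ for such $\Phi$ (unique, the completion); $\mathrm{QJac}_{k,L}$ is their space. Treating $\tau,\nu,z_i,\alpha_i$ as independent variables, $\mathsf T_q\phi$ (resp. $\mathsf T_{\alpha_i}\phi$) is the quasi-Jacobi form with completion $\partial\Phi/\partial\nu$ (resp. $\partial\Phi/\partial\alpha_i$); $\mathsf T_\lambda = \sum_i\lambda_i\mathsf T_{\alpha_i}$. The sum on the right is finite. *)

theory Defs
  imports "HOL-Analysis.Analysis"
begin

definition ee :: "complex \<Rightarrow> complex" where
  "ee x = exp (2 * of_real pi * \<i> * x)"

definition uhp :: "complex set" where
  "uhp = {\<tau>. Im \<tau> > 0}"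

definition index_matrix :: "real^'n^'n \<Rightarrow> bool" where
  "index_matrix L \<longleftrightarrow> transpose L = L \<and>
     (\<forall>i j. L$i$j \<in> \<rat>) \<and> (\<forall>i j. 2 * L$i$j \<in> \<int>) \<and> (\<forall>i. L$i$i \<in> \<int>)"

definition bil :: "real^'n^'n \<Rightarrow> complex^'n \<Rightarrow> complex^'n \<Rightarrow> complex" where
  "bil L x y = (\<Sum>i\<in>UNIV. \<Sum>j\<in>UNIV. x$i * of_real (L$i$j) * y$j)"

definition ivec :: "int^'n \<Rightarrow> complex^'n" where
  "ivec v = (\<chi> i. of_int (v$i))"

definition nuf :: "complex \<Rightarrow> real" where
  "nuf \<tau> = 1 / (8 * pi * Im \<tau>)"

definition alphaf :: "complex^'n \<Rightarrow> complex \<Rightarrow> 'n \<Rightarrow> real" where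
  "alphaf z \<tau> i = Im (z$i) / Im \<tau>"

text \<open>A family of coefficient functions phi_{i,j}(z,tau), i a natural number, j a multi-index
  in Z_{>=0}^n; this represents the formal expression sum phi_{i,j} nu^i alpha^j.\<close>
type_synonym 'n family = "nat \<Rightarrow> ('n \<Rightarrow> nat) \<Rightarrow> complex^'n \<Rightarrow> complex \<Rightarrow> complex"

definition fsupp :: "'n family \<Rightarrow> (nat \<times> ('n \<Rightarrow> nat)) set" where
  "fsupp \<Phi> = {(i, j). \<exists>z \<tau>. \<tau> \<in> uhp \<and> \<Phi> i j z \<tau> \<noteq> 0}"

definition feval :: "('n::finite) family \<Rightarrow> complex^'n \<Rightarrow> complex \<Rightarrow> complex" where
  "feval \<Phi> z \<tau> = (\<Sum>(i, j)\<in>fsupp \<Phi>. \<Phi> i j z \<tau> * of_real (nuf \<tau>) ^ i *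
       (\<Prod>l\<in>UNIV. of_real (alphaf z \<tau> l) ^ j l))"

text \<open>Holomorphic on C^n x H: jointly continuous and holomorphic in each variable separately
  (equivalent to holomorphy by Osgood's lemma).\<close>
definition holo_CnH :: "(complex^'n \<Rightarrow> complex \<Rightarrow> complex) \<Rightarrow> bool" where
  "holo_CnH f \<longleftrightarrow> continuous_on (UNIV \<times> uhp) (\<lambda>(z, \<tau>). f z \<tau>) \<and>
     (\<forall>z. (\<lambda>\<tau>. f z \<tau>) holomorphic_on uhp) \<and>
     (\<forall>z. \<forall>\<tau>\<in>uhp. \<forall>i. (\<lambda>w. f (\<chi> l. if l = i then w else z$l) \<tau>) holomorphic_on UNIV)"

text \<open>Fourier expansion sum_{m>=0} sum_{r in Z^n} c(m,r) q^m e(z.r), q = e(tau),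
  converging on H (for holomorphic periodic functions this is absolute convergence).\<close>
definition has_weak_fourier :: "(complex^'n \<Rightarrow> complex \<Rightarrow> complex) \<Rightarrow> bool" where
  "has_weak_fourier f \<longleftrightarrow> (\<exists>c :: nat \<Rightarrow> int^'n \<Rightarrow> complex. \<forall>z. \<forall>\<tau>\<in>uhp.
     ((\<lambda>(m, r). c m r * ee \<tau> ^ m * ee (\<Sum>l\<in>UNIV. z$l * of_int (r$l))) has_sum f z \<tau>) UNIV)"

definition ahwjf :: "int \<Rightarrow> real^'n^'n \<Rightarrow> ('n::finite) family \<Rightarrow> bool" where
  "ahwjf k L \<Phi> \<longleftrightarrow>
     finite (fsupp \<Phi>) \<and>
     (\<forall>i j. holo_CnH (\<Phi> i j) \<and> has_weak_fourier (\<Phi> i j)) \<and>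
     (\<forall>a b c d :: int. a * d - b * c = 1 \<longrightarrow> (\<forall>z. \<forall>\<tau>\<in>uhp.
        feval \<Phi> (\<chi> l. z$l / (of_int c * \<tau> + of_int d)) ((of_int a * \<tau> + of_int b) / (of_int c * \<tau> + of_int d))
        = (of_int c * \<tau> + of_int d) powi k * ee (of_int c * bil L z z / (of_int c * \<tau> + of_int d))
          * feval \<Phi> z \<tau>)) \<and>
     (\<forall>v w :: int^'n. \<forall>z. \<forall>\<tau>\<in>uhp.
        feval \<Phi> (\<chi> l. z$l + of_int (v$l) * \<tau> + of_int (w$l)) \<tau>
        = ee (- bil L (ivec v) (ivec v) * \<tau> - 2 * bil L (ivec v) z) * feval \<Phi> z \<tau>)"

definition cterm :: "'n family \<Rightarrow> complex^'n \<Rightarrow> complex \<Rightarrow> complex" where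
  "cterm \<Phi> = \<Phi> 0 (\<lambda>_. 0)"

definition qjac_completion :: "int \<Rightarrow> real^'n^'n \<Rightarrow> ('n::finite) family \<Rightarrow>
    (complex^'n \<Rightarrow> complex \<Rightarrow> complex) \<Rightarrow> bool" where
  "qjac_completion k L \<Phi> \<phi> \<longleftrightarrow> ahwjf k L \<Phi> \<and> cterm \<Phi> = \<phi>"

definition QJac :: "int \<Rightarrow> real^'n^'n \<Rightarrow> (complex^('n::finite) \<Rightarrow> complex \<Rightarrow> complex) set" where
  "QJac k L = {\<phi>. \<exists>\<Phi>. qjac_completion k L \<Phi> \<phi>}"

text \<open>Formal partial derivatives d/dnu and d/dalpha_l on families (treating nu, alpha as
  independent variables).\<close>
definition dnu :: "'n family \<Rightarrow> 'n family" where
  "dnu \<Phi> i j = (\<lambda>z \<tau>. of_nat (i + 1) * \<Phi> (i + 1) j z \<tau>)"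

definition dalpha :: "'n \<Rightarrow> 'n family \<Rightarrow> 'n family" where
  "dalpha l \<Phi> i j = (\<lambda>z \<tau>. of_nat (j l + 1) * \<Phi> i (j(l := j l + 1)) z \<tau>)"

definition dlambda :: "int^'n \<Rightarrow> ('n::finite) family \<Rightarrow> 'n family" where
  "dlambda v \<Phi> i j = (\<lambda>z \<tau>. \<Sum>l\<in>UNIV. of_int (v$l) * dalpha l \<Phi> i j z \<tau>)"

text \<open>If phi has completion Phi, then T_q^l phi = cterm (dnu^l Phi) and
  T_lambda phi = cterm (dlambda lambda Phi).\<close>
definition Tq_pow :: "nat \<Rightarrow> 'n family \<Rightarrow> complex^'n \<Rightarrow> complex \<Rightarrow> complex" where
  "Tq_pow m \<Phi> = cterm ((dnu ^^ m) \<Phi>)"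

definition Tlam :: "int^'n \<Rightarrow> ('n::finite) family \<Rightarrow> complex^'n \<Rightarrow> complex \<Rightarrow> complex" where
  "Tlam v \<Phi> = cterm (dlambda v \<Phi>)"

end

theory Submission imports Defs "HOL-Complex_Analysis.Conformal_Mappings" "HOL-Computational_Algebra.Polynomial" begin


lemma mtest_fs:
  fixes a :: "'i \<Rightarrow> 't \<Rightarrow> complex" and M :: "'i \<Rightarrow> real"
  assumes Ms: "M summable_on UNIV"
    and bnd: "\<And>x t. t \<in> T \<Longrightarrow> norm (a x t) \<le> M x"
    and hs: "\<And>t. t \<in> T \<Longrightarrow> ((\<lambda>x. a x t) has_sum G t) UNIV"
  shows "uniform_limit T (\<lambda>F t. sum (\<lambda>x. a x t) F) G (finite_subsets_at_top UNIV)"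
proof (rule uniform_limitI)
  fix e :: real assume e: "e > 0"
  have "(sum M \<longlongrightarrow> infsum M UNIV) (finite_subsets_at_top UNIV)"
    using Ms by (simp add: has_sum_def[symmetric] has_sum_infsum)
  then have ev: "\<forall>\<^sub>F Y in finite_subsets_at_top UNIV. dist (sum M Y) (infsum M UNIV) < e"
    using e tendsto_iff by blast
  show "\<forall>\<^sub>F Y in finite_subsets_at_top UNIV. \<forall>t\<in>T. dist (sum (\<lambda>x. a x t) Y) (G t) < e"
    using eventually_conj[OF ev eventually_finite_subsets_at_top_weakI[of UNIV "\<lambda>X. finite X"]]
  proof (rule eventually_mono)
    fix Y assume YY: "dist (sum M Y) (infsum M UNIV) < e \<and> finite Y"
    then have Y: "dist (sum M Y) (infsum M UNIV) < e" and fin: "finite Y" by auto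
    show "\<forall>t\<in>T. dist (sum (\<lambda>x. a x t) Y) (G t) < e"
    proof
      fix t assume t: "t \<in> T"
      have as: "(\<lambda>x. a x t) summable_on UNIV" using hs[OF t] by (auto simp: summable_on_def)
      have as2: "(\<lambda>x. a x t) summable_on (UNIV - Y)" by (rule summable_on_subset[OF as]) auto
      have Ms2: "M summable_on (UNIV - Y)" by (rule summable_on_subset[OF Ms]) auto
      have Gt: "G t = sum (\<lambda>x. a x t) Y + infsum (\<lambda>x. a x t) (UNIV - Y)"
      proof -
        have "G t = infsum (\<lambda>x. a x t) (Y \<union> (UNIV - Y))" using hs[OF t] by (simp add: infsumI)
        also have "\<dots> = infsum (\<lambda>x. a x t) Y + infsum (\<lambda>x. a x t) (UNIV - Y)"
          by (rule infsum_Un_disjoint) (use fin as2 in auto)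
        finally show ?thesis using fin by simp
      qed
      have IM: "infsum M UNIV = sum M Y + infsum M (UNIV - Y)"
      proof -
        have "infsum M UNIV = infsum M (Y \<union> (UNIV - Y))" by simp
        also have "\<dots> = infsum M Y + infsum M (UNIV - Y)"
          by (rule infsum_Un_disjoint) (use fin Ms2 in auto)
        finally show ?thesis using fin by simp
      qed
      have abs2: "(\<lambda>x. norm (a x t)) summable_on (UNIV - Y)"
        by (rule summable_on_comparison_test[OF Ms2]) (use bnd t in auto)
      have "norm (infsum (\<lambda>x. a x t) (UNIV - Y)) \<le> infsum (\<lambda>x. norm (a x t)) (UNIV - Y)"
        by (rule norm_infsum_bound[OF abs2])
      also have "\<dots> \<le> infsum M (UNIV - Y)"
        by (rule infsum_mono[OF abs2 Ms2]) (use bnd t in auto)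
      also have "\<dots> < e" using Y IM by (simp add: dist_real_def)
      finally show "dist (sum (\<lambda>x. a x t) Y) (G t) < e" using Gt by (simp add: dist_norm norm_minus_commute)
    qed
  qed
qed

lemma summable_on_finsum:
  fixes f :: "'b \<Rightarrow> 'a \<Rightarrow> real"
  assumes "finite B" "\<And>b. b \<in> B \<Longrightarrow> f b summable_on A"
  shows "(\<lambda>x. \<Sum>b\<in>B. f b x) summable_on A"
  using assms by (induction B rule: finite_induct) (auto intro: summable_on_add)

lemma norm_ee: "norm (ee x) = exp (- 2 * pi * Im x)"
  by (simp add: ee_def norm_exp_eq_Re)

lemma norm_ee_sum:
  fixes w :: "complex^'n::finite" and r :: "int^'n"
  shows "norm (ee (\<Sum>l\<in>UNIV. w$l * of_int (r$l))) = (\<Prod>l\<in>UNIV. exp (- 2 * pi * of_int (r$l) * Im (w$l)))"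
proof -
  have "norm (ee (\<Sum>l\<in>UNIV. w$l * of_int (r$l))) = exp (\<Sum>l\<in>UNIV. - 2 * pi * of_int (r$l) * Im (w$l))"
    by (simp add: norm_ee Im_sum sum_distrib_left algebra_simps)
  also have "\<dots> = (\<Prod>l\<in>UNIV. exp (- 2 * pi * of_int (r$l) * Im (w$l)))"
    by (simp add: exp_sum)
  finally show ?thesis .
qed

lemma holo_ee [holomorphic_intros]: "f holomorphic_on A \<Longrightarrow> (\<lambda>x. ee (f x)) holomorphic_on A"
  unfolding ee_def by (intro holomorphic_intros)

lemma exp_bound_pm:
  fixes k :: int and y y0 :: real
  assumes "\<bar>y - y0\<bar> \<le> 1"
  shows "exp (- 2 * pi * k * y) \<le> exp (- 2 * pi * k * (y0 - 1)) + exp (- 2 * pi * k * (y0 + 1))"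
proof (cases "k \<ge> 0")
  case True
  have "- 2 * pi * k * y \<le> - 2 * pi * k * (y0 - 1)"
    using True assms by (intro mult_left_mono_neg) (auto simp: abs_le_iff mult_nonneg_nonneg)
  then have "exp (- 2 * pi * k * y) \<le> exp (- 2 * pi * k * (y0 - 1))" by simp
  then show ?thesis using exp_ge_zero[of "- 2 * pi * k * (y0 + 1)"] by linarith
next
  case False
  have "- 2 * pi * k * y \<le> - 2 * pi * k * (y0 + 1)"
  proof -
    have "0 \<le> 2 * pi * k * (y - (y0 + 1))"
      using False assms by (intro mult_nonpos_nonpos) (auto simp: abs_le_iff mult_nonneg_nonneg mult_nonneg_nonpos mult_nonpos_nonneg)
    then show ?thesis by (simp add: algebra_simps)
  qed
  then have "exp (- 2 * pi * k * y) \<le> exp (- 2 * pi * k * (y0 + 1))" by simp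
  then show ?thesis using exp_ge_zero[of "- 2 * pi * k * (y0 - 1)"] by linarith
qed



lemma GCL:
  fixes f :: "complex^'n::finite \<Rightarrow> complex \<Rightarrow> complex"
  assumes fo: "has_weak_fourier f" and A: "open A"
    and gh: "\<And>l. (\<lambda>t. g t $ l) holomorphic_on A" and hh: "h holomorphic_on A"
    and hA: "\<And>t. t \<in> A \<Longrightarrow> h t \<in> uhp"
  shows "(\<lambda>t. f (g t) (h t)) holomorphic_on A"
proof -
  obtain c :: "nat \<Rightarrow> int^'n \<Rightarrow> complex" where c: "\<And>z \<tau>. \<tau> \<in> uhp \<Longrightarrow>
     ((\<lambda>(m, r). c m r * ee \<tau> ^ m * ee (\<Sum>l\<in>UNIV. z$l * of_int (r$l))) has_sum f z \<tau>) UNIV"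
    using fo unfolding has_weak_fourier_def by blast
  define a where "a = (\<lambda>(m, r) t. c m r * ee (h t) ^ m * ee (\<Sum>l\<in>UNIV. g t $ l * of_int (r$l)))"
  have aholo: "a x holomorphic_on A" for x
    unfolding a_def by (cases x) (auto intro!: holomorphic_intros gh hh)
  have "(\<lambda>t. f (g t) (h t)) field_differentiable (at t0)" if t0: "t0 \<in> A" for t0
  proof -
    define y0 where "y0 = Im (h t0)"
    have y0: "y0 > 0" using hA[OF t0] by (simp add: uhp_def y0_def)
    have ch: "isCont h t0" using hh A t0 holomorphic_on_imp_continuous_on continuous_on_eq_continuous_at by blast
    have cg: "isCont (\<lambda>t. g t $ l) t0" for l using gh A t0 holomorphic_on_imp_continuous_on continuous_on_eq_continuous_at by blast
    have e1: "\<forall>\<^sub>F t in nhds t0. t \<in> A" using A t0 eventually_nhds by blast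
    have e2: "\<forall>\<^sub>F t in nhds t0. dist (Im (h t)) y0 < y0 / 2"
    proof -
      have "((\<lambda>t. Im (h t)) \<longlongrightarrow> y0) (nhds t0)"
        using ch unfolding y0_def isCont_def by (metis tendsto_Im tendsto_at_iff_tendsto_nhds)
      from tendstoD[OF this, of "y0/2"] show ?thesis using y0 by simp
    qed
    have e3: "\<forall>\<^sub>F t in nhds t0. \<forall>l. dist (Im (g t $ l)) (Im (g t0 $ l)) < 1"
    proof (rule eventually_all_finite)
      fix l
      have "((\<lambda>t. Im (g t $ l)) \<longlongrightarrow> Im (g t0 $ l)) (nhds t0)"
        using cg[of l] unfolding isCont_def by (metis tendsto_Im tendsto_at_iff_tendsto_nhds)
      from tendstoD[OF this, of 1] show "\<forall>\<^sub>F t in nhds t0. dist (Im (g t $ l)) (Im (g t0 $ l)) < 1" by simp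
    qed
    obtain d where d: "d > 0" and dP: "\<And>t. dist t t0 < d \<Longrightarrow> t \<in> A \<and> dist (Im (h t)) y0 < y0 / 2 \<and>
        (\<forall>l. dist (Im (g t $ l)) (Im (g t0 $ l)) < 1)"
      using eventually_conj[OF e1 eventually_conj[OF e2 e3]] unfolding eventually_nhds_metric by blast
    define r where "r = d / 2"
    have r: "r > 0" using d by (simp add: r_def)
    have cb: "t \<in> cball t0 r \<Longrightarrow> dist t t0 < d" for t using d by (simp add: r_def dist_commute)
    have cbA: "cball t0 r \<subseteq> A"
    proof
      fix t assume t: "t \<in> cball t0 r"
      show "t \<in> A" using dP[OF cb[OF t]] by simp
    qed
    define \<tau>L where "\<tau>L = \<i> * of_real (y0 / 2)"
    have \<tau>L: "\<tau>L \<in> uhp" using y0 by (simp add: \<tau>L_def uhp_def)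
    define zB where "zB = (\<lambda>B. (\<chi> l. \<i> * of_real (if l \<in> B then Im (g t0 $ l) - 1 else Im (g t0 $ l) + 1)) :: complex^'n)"
    define b where "b = (\<lambda>B (m, r). c m r * ee \<tau>L ^ m * ee (\<Sum>l\<in>UNIV. zB B $ l * of_int (r$l)))"
    define M where "M = (\<lambda>x. \<Sum>B\<in>Pow UNIV. norm (b B x))"
    have Ms: "M summable_on UNIV"
      unfolding M_def
    proof (rule summable_on_finsum)
      fix B :: "'n set"
      have "b B summable_on UNIV" using c[OF \<tau>L, of "zB B"] unfolding b_def summable_on_def by blast
      then show "(\<lambda>x. norm (b B x)) summable_on UNIV" using summable_on_iff_abs_summable_on_complex by blast
    qed simp
    have bnd: "norm (a x t) \<le> M x" if t: "t \<in> cball t0 r" for x t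
    proof (cases x)
      case (Pair m rr)
      have dt: "dist (Im (h t)) y0 < y0 / 2" "\<And>l. dist (Im (g t $ l)) (Im (g t0 $ l)) < 1"
        using dP[OF cb[OF t]] by auto
      define A1 where "A1 = (\<lambda>l. exp (- 2 * pi * of_int (rr$l) * (Im (g t0 $ l) - 1)))"
      define A2 where "A2 = (\<lambda>l. exp (- 2 * pi * of_int (rr$l) * (Im (g t0 $ l) + 1)))"
      have hm: "exp (- 2 * pi * Im (h t)) ^ m \<le> exp (- 2 * pi * (y0/2)) ^ m"
      proof -
        have "Im (h t) \<ge> y0 / 2" using dt(1) unfolding dist_real_def by arith
        then show ?thesis by (intro power_mono) auto
      qed
      have gp: "(\<Prod>l\<in>UNIV. exp (- 2 * pi * of_int (rr$l) * Im (g t $ l))) \<le> (\<Prod>l\<in>UNIV. A1 l + A2 l)"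
        proof (intro prod_mono conjI)
          fix l :: 'n
          have "\<bar>Im (g t $ l) - Im (g t0 $ l)\<bar> \<le> 1" using dt(2)[of l] by (simp add: dist_real_def)
          from exp_bound_pm[OF this, of "rr$l"]
          show "exp (- 2 * pi * of_int (rr$l) * Im (g t $ l)) \<le> A1 l + A2 l" by (simp add: A1_def A2_def)
        qed simp
      have pa: "(\<Prod>l\<in>UNIV. A1 l + A2 l) = (\<Sum>B\<in>Pow UNIV. (\<Prod>l\<in>B. A1 l) * (\<Prod>l\<in>UNIV-B. A2 l))"
        by (rule prod_add) simp
      have nb: "norm (b B x) = norm (c m rr) * exp (- 2 * pi * (y0/2)) ^ m * ((\<Prod>l\<in>B. A1 l) * (\<Prod>l\<in>UNIV-B. A2 l))" for B
      proof -
        have P1: "(\<Prod>l\<in>UNIV. exp (- 2 * pi * of_int (rr$l) * Im (zB B $ l))) = 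
              (\<Prod>l\<in>B. exp (- 2 * pi * of_int (rr$l) * Im (zB B $ l))) * (\<Prod>l\<in>UNIV-B. exp (- 2 * pi * of_int (rr$l) * Im (zB B $ l)))"
          using prod.subset_diff[of B UNIV "\<lambda>l. exp (- 2 * pi * of_int (rr$l) * Im (zB B $ l))"] by (simp add: mult.commute)
        have P2: "(\<Prod>l\<in>B. exp (- 2 * pi * of_int (rr$l) * Im (zB B $ l))) = (\<Prod>l\<in>B. A1 l)"
          by (rule prod.cong) (auto simp: zB_def A1_def)
        have P3: "(\<Prod>l\<in>UNIV-B. exp (- 2 * pi * of_int (rr$l) * Im (zB B $ l))) = (\<Prod>l\<in>UNIV-B. A2 l)"
          by (rule prod.cong) (auto simp: zB_def A2_def)
        have N1: "norm (b B x) = norm (c m rr) * norm (ee \<tau>L) ^ m * norm (ee (\<Sum>l\<in>UNIV. zB B $ l * of_int (rr$l)))"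
          unfolding b_def Pair by (simp only: case_prod_conv norm_mult norm_power)
        have N2: "norm (ee \<tau>L) = exp (- 2 * pi * (y0/2))" by (simp add: norm_ee \<tau>L_def)
        show ?thesis unfolding N1 N2 norm_ee_sum P1 P2 P3 ..
      qed
      have "norm (a x t) = norm (c m rr) * exp (- 2 * pi * Im (h t)) ^ m * (\<Prod>l\<in>UNIV. exp (- 2 * pi * of_int (rr$l) * Im (g t $ l)))"
        unfolding a_def Pair case_prod_conv norm_mult norm_power norm_ee_sum by (simp only: norm_ee)
      also have "\<dots> \<le> norm (c m rr) * exp (- 2 * pi * (y0/2)) ^ m * (\<Prod>l\<in>UNIV. A1 l + A2 l)"
        by (intro mult_mono hm gp) (auto intro: prod_nonneg)
      also have "\<dots> = M x"
        unfolding pa M_def nb by (simp add: sum_distrib_left)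
      finally show ?thesis .
    qed
    have hs: "((\<lambda>x. a x t) has_sum f (g t) (h t)) UNIV" if t: "t \<in> cball t0 r" for t
    proof -
      have "h t \<in> uhp" using hA cbA t by blast
      from c[OF this, of "g t"] show ?thesis
        by (simp add: a_def case_prod_unfold)
    qed
    have ul: "uniform_limit (cball t0 r) (\<lambda>F t. sum (\<lambda>x. a x t) F) (\<lambda>t. f (g t) (h t)) (finite_subsets_at_top UNIV)"
      by (rule mtest_fs[OF Ms bnd hs])
    have ev: "\<forall>\<^sub>F F in finite_subsets_at_top UNIV. continuous_on (cball t0 r) (\<lambda>t. sum (\<lambda>x. a x t) F) \<and>
        (\<lambda>t. sum (\<lambda>x. a x t) F) holomorphic_on ball t0 r"
    proof (intro always_eventually allI conjI)
      fix F :: "(nat \<times> (int^'n)) set"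
      have "(\<lambda>t. sum (\<lambda>x. a x t) F) holomorphic_on A" by (intro holomorphic_intros aholo)
      then show "continuous_on (cball t0 r) (\<lambda>t. sum (\<lambda>x. a x t) F)"
        "(\<lambda>t. sum (\<lambda>x. a x t) F) holomorphic_on ball t0 r"
        using cbA ball_subset_cball holomorphic_on_imp_continuous_on holomorphic_on_subset by blast+
    qed
    obtain "(\<lambda>t. f (g t) (h t)) holomorphic_on ball t0 r"
      using holomorphic_uniform_limit[OF ev ul] by auto
    then show ?thesis using r holomorphic_on_imp_differentiable_at by auto
  qed
  then show ?thesis
    by (simp add: holomorphic_on_def field_differentiable_at_within)
qed



lemma uhp_open: "open uhp" and uhp_conn: "connected uhp"
  unfolding uhp_def by (auto simp: open_halfspace_Im_gt)

definition upd :: "'a^'n \<Rightarrow> 'n \<Rightarrow> 'a \<Rightarrow> 'a^'n" where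
  "upd \<alpha> l x = (\<chi> l'. if l' = l then x else \<alpha> $ l')"

lemma upd_same [simp]: "upd \<alpha> l x $ l = x" and upd_other [simp]: "l' \<noteq> l \<Longrightarrow> upd \<alpha> l x $ l' = \<alpha> $ l'"
  and upd_id [simp]: "upd \<alpha> l (\<alpha> $ l) = \<alpha>"
  by (auto simp: upd_def vec_eq_iff)

lemma upd_nth: "upd \<alpha> l x $ l' = (if l' = l then x else \<alpha> $ l')"
  by (simp add: upd_def)

lemma holo_upd [holomorphic_intros]: "f holomorphic_on A \<Longrightarrow> (\<lambda>x. upd \<alpha> l (f x) $ l') holomorphic_on A"
  by (cases "l' = l") (auto intro: holomorphic_intros)

lemma line_zero:
  fixes f :: "complex \<Rightarrow> complex"
  assumes "f holomorphic_on UNIV" "\<And>w. Im w = y \<Longrightarrow> f w = 0"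
  shows "f w = 0"
proof (rule analytic_continuation[OF assms(1) open_UNIV connected_UNIV subset_UNIV UNIV_I])
  show "\<i> * of_real y islimpt {w. Im w = y}"
    unfolding islimpt_approachable
  proof (intro allI impI)
    fix e :: real assume e: "e > 0"
    show "\<exists>x'\<in>{w. Im w = y}. x' \<noteq> \<i> * of_real y \<and> dist x' (\<i> * of_real y) < e"
      by (rule bexI[of _ "\<i> * of_real y + of_real (e/2)"]) (use e in \<open>auto simp: dist_norm complex_eq_iff\<close>)
  qed
qed (use assms in auto)

lemma real_zero:
  fixes f :: "complex \<Rightarrow> complex"
  assumes "f holomorphic_on UNIV" "\<And>t::real. f (of_real t) = 0"
  shows "f w = 0"
  using line_zero[OF assms(1), of 0] assms(2) by (metis complex_is_Real_iff of_real_Re)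

lemma pos_zero:
  fixes f :: "complex \<Rightarrow> complex"
  assumes "f holomorphic_on UNIV" "\<And>t::real. t > 0 \<Longrightarrow> f (of_real t) = 0"
  shows "f w = 0"
proof (rule analytic_continuation[OF assms(1) open_UNIV connected_UNIV subset_UNIV UNIV_I])
  show "(1::complex) islimpt (of_real ` {0::real<..})"
    unfolding islimpt_approachable
  proof (intro allI impI)
    fix e :: real assume e: "e > 0"
    show "\<exists>x'\<in>of_real ` {0::real<..}. x' \<noteq> (1::complex) \<and> dist x' 1 < e"
    proof (rule bexI[of _ "of_real (1 + e/2)"])
      show "complex_of_real (1 + e / 2) \<in> complex_of_real ` {0::real<..}" using e by (intro imageI) auto
    qed (use e in \<open>auto simp: dist_norm\<close>)
  qed
qed (use assms in auto)

lemma uhp_line_zero: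
  fixes f :: "complex \<Rightarrow> complex"
  assumes "f holomorphic_on uhp" "y > 0" "\<And>w. Im w = y \<Longrightarrow> f w = 0" "w \<in> uhp"
  shows "f w = 0"
proof (rule analytic_continuation[OF assms(1) uhp_open uhp_conn])
  show "{w. Im w = y} \<subseteq> uhp" using assms(2) by (auto simp: uhp_def)
  show "\<i> * of_real y \<in> uhp" using assms(2) by (auto simp: uhp_def)
  show "\<i> * of_real y islimpt {w. Im w = y}"
    unfolding islimpt_approachable
  proof (intro allI impI)
    fix e :: real assume e: "e > 0"
    show "\<exists>x'\<in>{w. Im w = y}. x' \<noteq> \<i> * of_real y \<and> dist x' (\<i> * of_real y) < e"
      by (rule bexI[of _ "\<i> * of_real y + of_real (e/2)"]) (use e in \<open>auto simp: dist_norm complex_eq_iff\<close>)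
  qed
qed (use assms in auto)

lemma IL:
  fixes F :: "complex^'n::finite \<Rightarrow> complex \<Rightarrow> complex \<Rightarrow> complex^'n \<Rightarrow> complex"
  assumes hnu: "\<And>z \<tau> \<alpha>. \<tau> \<in> uhp \<Longrightarrow> (\<lambda>\<nu>. F z \<tau> \<nu> \<alpha>) holomorphic_on UNIV"
    and hal: "\<And>z \<tau> \<nu> \<alpha> l. \<tau> \<in> uhp \<Longrightarrow> (\<lambda>x. F z \<tau> \<nu> (upd \<alpha> l x)) holomorphic_on UNIV"
    and htau: "\<And>z \<nu> \<alpha>. (\<lambda>\<tau>. F z \<tau> \<nu> \<alpha>) holomorphic_on uhp"
    and hz: "\<And>z \<tau> \<nu> \<alpha> l. \<tau> \<in> uhp \<Longrightarrow> (\<lambda>w. F (upd z l w) \<tau> \<nu> \<alpha>) holomorphic_on UNIV"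
    and h0: "\<And>z \<tau>. \<tau> \<in> uhp \<Longrightarrow> F z \<tau> (of_real (nuf \<tau>)) (\<chi> l. of_real (alphaf z \<tau> l)) = 0"
    and \<tau>: "\<tau> \<in> uhp"
  shows "F z \<tau> \<nu> \<alpha> = 0"
proof -
  have step1: "F z \<tau> (of_real (nuf \<tau>)) \<alpha> = 0" if \<tau>: "\<tau> \<in> uhp" for z :: "complex^'n" and \<tau> and \<alpha> :: "complex^'n"
  proof -
    have "\<forall>(z::complex^'n) (\<alpha>::complex^'n). (\<forall>l. l \<notin> S \<longrightarrow> \<alpha> $ l = of_real (alphaf z \<tau> l)) \<longrightarrow> F z \<tau> (of_real (nuf \<tau>)) \<alpha> = 0"
      if "finite S" for S :: "'n set"
      using that
    proof (induction S rule: finite_induct)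
      case empty
      show ?case
      proof (intro allI impI)
        fix z \<alpha> :: "complex^'n" assume "\<forall>l. l \<notin> {} \<longrightarrow> \<alpha> $ l = complex_of_real (alphaf z \<tau> l)"
        then have "\<alpha> = (\<chi> l. of_real (alphaf z \<tau> l))" by (auto simp: vec_eq_iff)
        then show "F z \<tau> (of_real (nuf \<tau>)) \<alpha> = 0" using h0[OF \<tau>] by simp
      qed
    next
      case (insert l S)
      show ?case
      proof (intro allI impI)
        fix z \<alpha> :: "complex^'n" assume as: "\<forall>l'. l' \<notin> insert l S \<longrightarrow> \<alpha> $ l' = complex_of_real (alphaf z \<tau> l')"
        have real: "F z \<tau> (of_real (nuf \<tau>)) (upd \<alpha> l (of_real r)) = 0" for r
        proof -
          have "F (upd z l w) \<tau> (of_real (nuf \<tau>)) (upd \<alpha> l (of_real r)) = 0"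
            if w: "Im w = r * Im \<tau>" for w
          proof -
            have "\<forall>l'. l' \<notin> S \<longrightarrow> upd \<alpha> l (of_real r) $ l' = of_real (alphaf (upd z l w) \<tau> l')"
            proof (intro allI impI)
              fix l' assume l': "l' \<notin> S"
              show "upd \<alpha> l (of_real r) $ l' = of_real (alphaf (upd z l w) \<tau> l')"
              proof (cases "l' = l")
                case True
                then show ?thesis using w \<tau> by (simp add: alphaf_def uhp_def)
              next
                case False
                then show ?thesis using as l' by (simp add: alphaf_def)
              qed
            qed
            then show ?thesis using insert.IH by blast
          qed
          then have "F (upd z l w) \<tau> (of_real (nuf \<tau>)) (upd \<alpha> l (of_real r)) = 0" for w
            by (rule line_zero[OF hz[OF \<tau>]])
          from this[of "z $ l"] show ?thesis by simp
        qed
        have "F z \<tau> (of_real (nuf \<tau>)) (upd \<alpha> l x) = 0" for x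
          by (rule real_zero[OF hal[OF \<tau>]]) (use real in auto)
        from this[of "\<alpha> $ l"] show "F z \<tau> (of_real (nuf \<tau>)) \<alpha> = 0" by simp
      qed
    qed
    from this[of UNIV] show ?thesis by simp
  qed
  have "F z \<tau> (of_real t) \<alpha> = 0" if t: "t > 0" for t
  proof -
    define y where "y = 1 / (8 * pi * t)"
    have y: "y > 0" using t by (simp add: y_def)
    have "F z \<tau>' (of_real t) \<alpha> = 0" if "Im \<tau>' = y" for \<tau>'
    proof -
      have "\<tau>' \<in> uhp" using that y by (simp add: uhp_def)
      moreover have "nuf \<tau>' = t" using that t by (simp add: nuf_def y_def)
      ultimately show ?thesis using step1 by force
    qed
    then show ?thesis by (rule uhp_line_zero[OF htau y _ \<tau>])
  qed
  then show ?thesis by (rule pos_zero[OF hnu[OF \<tau>]])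
qed



definition Pf :: "('n::finite) family \<Rightarrow> complex^'n \<Rightarrow> complex \<Rightarrow> complex \<Rightarrow> complex^'n \<Rightarrow> complex" where
  "Pf \<Phi> z \<tau> \<nu> \<alpha> = (\<Sum>(i, j)\<in>fsupp \<Phi>. \<Phi> i j z \<tau> * \<nu> ^ i * (\<Prod>l\<in>UNIV. (\<alpha>$l) ^ j l))"

lemma feval_Pf: "feval \<Phi> z \<tau> = Pf \<Phi> z \<tau> (of_real (nuf \<tau>)) (\<chi> l. of_real (alphaf z \<tau> l))"
  by (simp add: feval_def Pf_def)

lemma Pf_holo:
  assumes "\<And>i j. (\<lambda>x. \<Phi> i j (zf x) (tf x)) holomorphic_on A" "nf holomorphic_on A"
    "\<And>l. (\<lambda>x. af x $ l) holomorphic_on A"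
  shows "(\<lambda>x. Pf \<Phi> (zf x) (tf x) (nf x) (af x)) holomorphic_on A"
  unfolding Pf_def case_prod_unfold
  by (intro holomorphic_on_sum holomorphic_on_mult holomorphic_on_power holomorphic_on_prod assms)

lemma coef_holo:
  assumes "ahwjf k L \<Phi>" "open A" "\<And>l. (\<lambda>t. g t $ l) holomorphic_on A" "h holomorphic_on A"
    "\<And>t. t \<in> A \<Longrightarrow> h t \<in> uhp"
  shows "(\<lambda>t. \<Phi> i j (g t) (h t)) holomorphic_on A"
proof -
  have "has_weak_fourier (\<Phi> i j)" using assms(1) unfolding ahwjf_def by blast
  then show ?thesis by (rule GCL[OF _ assms(2-5)]) 
qed

lemma bil_holo [holomorphic_intros]:
  assumes "\<And>l. (\<lambda>t. x t $ l) holomorphic_on A" "\<And>l. (\<lambda>t. y t $ l) holomorphic_on A"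
  shows "(\<lambda>t. bil L (x t) (y t)) holomorphic_on A"
  unfolding bil_def by (intro holomorphic_on_sum holomorphic_on_mult holomorphic_on_const assms)

lemma holo_vec: "(\<And>l. (\<lambda>x. f x l) holomorphic_on A) \<Longrightarrow> (\<lambda>x. (\<chi> l. f x l) $ l') holomorphic_on A"
  by simp

lemmas hrules = holomorphic_on_diff holomorphic_on_add holomorphic_on_mult holomorphic_on_const holomorphic_on_id holomorphic_on_ident
  holo_vec holo_upd holo_ee bil_holo holomorphic_on_power

lemma elliptic_poly:
  fixes \<Phi> :: "('n::finite) family"
  assumes ah: "ahwjf k L \<Phi>" and \<tau>: "\<tau> \<in> uhp"
  shows "Pf \<Phi> (\<chi> l. z$l + of_int (v$l) * \<tau> + of_int (w$l)) \<tau> \<nu> (\<chi> l. \<alpha>$l + of_int (v$l))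
      = ee (- bil L (ivec v) (ivec v) * \<tau> - 2 * bil L (ivec v) z) * Pf \<Phi> z \<tau> \<nu> \<alpha>"
proof -
  define F where "F = (\<lambda>z \<tau> \<nu> \<alpha>. Pf \<Phi> (\<chi> l. z$l + of_int (v$l) * \<tau> + of_int (w$l)) \<tau> \<nu> (\<chi> l. \<alpha>$l + of_int (v$l))
      - ee (- bil L (ivec v) (ivec v) * \<tau> - 2 * bil L (ivec v) z) * Pf \<Phi> z \<tau> \<nu> \<alpha>)"
  have "F z \<tau> \<nu> \<alpha> = 0"
  proof (rule IL[where F=F and z=z and \<nu>=\<nu> and \<alpha>=\<alpha>, OF _ _ _ _ _ \<tau>])
    fix z :: "complex^'n" and \<tau> \<alpha> assume \<tau>: "\<tau> \<in> uhp"
    show "(\<lambda>\<nu>. F z \<tau> \<nu> \<alpha>) holomorphic_on UNIV"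
      unfolding F_def by (intro hrules Pf_holo)
  next
    fix z :: "complex^'n" and \<tau> \<nu> \<alpha> l assume \<tau>: "\<tau> \<in> uhp"
    show "(\<lambda>x. F z \<tau> \<nu> (upd \<alpha> l x)) holomorphic_on UNIV"
      unfolding F_def by (intro hrules Pf_holo)
  next
    fix z :: "complex^'n" and \<nu> \<alpha>
    show "(\<lambda>\<tau>. F z \<tau> \<nu> \<alpha>) holomorphic_on uhp"
      unfolding F_def by (intro hrules Pf_holo coef_holo[OF ah uhp_open] | simp)+
  next
    fix z :: "complex^'n" and \<tau> \<nu> \<alpha> l assume \<tau>: "\<tau> \<in> uhp"
    show "(\<lambda>w. F (upd z l w) \<tau> \<nu> \<alpha>) holomorphic_on UNIV"
      unfolding F_def by (intro hrules Pf_holo coef_holo[OF ah open_UNIV] | simp add: \<tau>)+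
  next
    fix z :: "complex^'n" and \<tau> assume \<tau>: "\<tau> \<in> uhp"
    have "(\<chi> l. complex_of_real (alphaf z \<tau> l) + of_int (v$l)) =
        (\<chi> l. complex_of_real (alphaf (\<chi> l. z$l + of_int (v$l) * \<tau> + of_int (w$l)) \<tau> l))"
    proof -
      have "Im \<tau> \<noteq> 0" using \<tau> by (simp add: uhp_def)
      then show ?thesis by (simp add: vec_eq_iff alphaf_def add_divide_distrib)
    qed
    moreover have "feval \<Phi> (\<chi> l. z$l + of_int (v$l) * \<tau> + of_int (w$l)) \<tau>
        = ee (- bil L (ivec v) (ivec v) * \<tau> - 2 * bil L (ivec v) z) * feval \<Phi> z \<tau>"
      using ah \<tau> unfolding ahwjf_def by blast
    ultimately show "F z \<tau> (of_real (nuf \<tau>)) (\<chi> l. of_real (alphaf z \<tau> l)) = 0"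
      unfolding F_def feval_Pf by simp
  qed
  then show ?thesis unfolding F_def right_minus_eq .
qed



lemma Dnz:
  assumes "a * d - b * c = (1::int)" "\<tau> \<in> uhp"
  shows "of_int c * \<tau> + of_int d \<noteq> 0"
proof
  assume h: "of_int c * \<tau> + of_int d = 0"
  have "of_int c * Im \<tau> = 0" using arg_cong[OF h, of Im] by simp
  then have "c = 0" using assms(2) by (simp add: uhp_def)
  then have "d = 0" using h by simp
  then show False using assms(1) \<open>c = 0\<close> by simp
qed

lemma Im_mob:
  assumes "a * d - b * c = (1::int)"
  shows "Im ((of_int a * \<tau> + of_int b) / (of_int c * \<tau> + of_int d)) = Im \<tau> / (cmod (of_int c * \<tau> + of_int d))^2"
proof -
  have e: "real_of_int a * real_of_int d - real_of_int b * real_of_int c = 1"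
    using assms by (metis of_int_1 of_int_diff of_int_mult)
  have "Im (of_int a * \<tau> + of_int b) * Re (of_int c * \<tau> + of_int d) - Re (of_int a * \<tau> + of_int b) * Im (of_int c * \<tau> + of_int d)
      = Im \<tau> * (real_of_int a * real_of_int d - real_of_int b * real_of_int c)"
    by (simp add: algebra_simps)
  then show ?thesis using e by (simp add: Im_divide')
qed

lemma mob_uhp:
  assumes "a * d - b * c = (1::int)" "\<tau> \<in> uhp"
  shows "(of_int a * \<tau> + of_int b) / (of_int c * \<tau> + of_int d) \<in> uhp"
  using Im_mob[OF assms(1), of \<tau>] Dnz[OF assms] assms(2) by (simp add: uhp_def)

lemma nu_identity:
  fixes D :: complex and c y :: real
  assumes "Im D = c * y" "y \<noteq> 0"
  shows "D^2 * of_real (1 / (8 * pi * y)) + of_real c * D / (4 * of_real pi * \<i>) = of_real ((cmod D)^2 / (8 * pi * y))"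
proof -
  obtain u v where D: "D = Complex u v" by (cases D)
  have v: "v = c * y" using assms(1) D by simp
  have m: "(cmod D)^2 = u^2 + v^2" by (simp add: D cmod_power2)
  show ?thesis unfolding m unfolding D v using assms(2)
    by (simp add: complex_eq_iff field_simps power2_eq_square)
qed

lemma nuf_mob:
  assumes "a * d - b * c = (1::int)" "\<tau> \<in> uhp"
  shows "complex_of_real (nuf ((of_int a * \<tau> + of_int b) / (of_int c * \<tau> + of_int d)))
    = (of_int c * \<tau> + of_int d)^2 * of_real (nuf \<tau>) + of_int c * (of_int c * \<tau> + of_int d) / (4 * of_real pi * \<i>)"
proof -
  have y: "Im \<tau> > 0" using assms(2) by (simp add: uhp_def)
  have n: "cmod (of_int c * \<tau> + of_int d) \<noteq> 0" using Dnz[OF assms] by simp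
  have "nuf ((of_int a * \<tau> + of_int b) / (of_int c * \<tau> + of_int d)) = (cmod (of_int c * \<tau> + of_int d))^2 / (8 * pi * Im \<tau>)"
    unfolding nuf_def Im_mob[OF assms(1)] using n by (simp add: field_simps)
  moreover have "Im (of_int c * \<tau> + of_int d) = real_of_int c * Im \<tau>" by simp
  note nu_identity[OF this]
  ultimately show ?thesis using y by (simp add: nuf_def mult.commute)
qed

lemma alphaf_mob:
  assumes "a * d - b * c = (1::int)" "\<tau> \<in> uhp"
  shows "complex_of_real (alphaf (\<chi> l. z$l / (of_int c * \<tau> + of_int d)) ((of_int a * \<tau> + of_int b) / (of_int c * \<tau> + of_int d)) l)
    = (of_int c * \<tau> + of_int d) * of_real (alphaf z \<tau> l) - of_int c * z $ l"
proof -
  have y: "Im \<tau> > 0" using assms(2) by (simp add: uhp_def)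
  have n: "cmod (of_int c * \<tau> + of_int d) \<noteq> 0" using Dnz[OF assms] by simp
  have "alphaf (\<chi> l. z$l / (of_int c * \<tau> + of_int d)) ((of_int a * \<tau> + of_int b) / (of_int c * \<tau> + of_int d)) l
     = (Im (z$l) * (of_int c * Re \<tau> + of_int d) - Re (z$l) * (of_int c * Im \<tau>)) / Im \<tau>"
    unfolding alphaf_def Im_mob[OF assms(1)] using n y by (simp add: Im_divide' field_simps)
  then show ?thesis using y
    by (simp add: complex_eq_iff alphaf_def field_simps)
qed

lemma modular_poly:
  fixes \<Phi> :: "('n::finite) family"
  assumes ah: "ahwjf k L \<Phi>" and det: "a * d - b * c = (1::int)" and \<tau>: "\<tau> \<in> uhp"
  shows "Pf \<Phi> (\<chi> l. z$l / (of_int c * \<tau> + of_int d)) ((of_int a * \<tau> + of_int b) / (of_int c * \<tau> + of_int d))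
       ((of_int c * \<tau> + of_int d)^2 * \<nu> + of_int c * (of_int c * \<tau> + of_int d) / (4 * of_real pi * \<i>))
       (\<chi> l. (of_int c * \<tau> + of_int d) * \<alpha>$l - of_int c * z$l)
    = (of_int c * \<tau> + of_int d) powi k * ee (of_int c * bil L z z / (of_int c * \<tau> + of_int d)) * Pf \<Phi> z \<tau> \<nu> \<alpha>"
proof -
  define F where "F = (\<lambda>z \<tau> \<nu> \<alpha>. Pf \<Phi> (\<chi> l. z$l / (of_int c * \<tau> + of_int d)) ((of_int a * \<tau> + of_int b) / (of_int c * \<tau> + of_int d))
       ((of_int c * \<tau> + of_int d)^2 * \<nu> + of_int c * (of_int c * \<tau> + of_int d) / (4 * of_real pi * \<i>))
       (\<chi> l. (of_int c * \<tau> + of_int d) * \<alpha>$l - of_int c * z$l)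
    - (of_int c * \<tau> + of_int d) powi k * ee (of_int c * bil L z z / (of_int c * \<tau> + of_int d)) * Pf \<Phi> z \<tau> \<nu> \<alpha>)"
  have nz: "\<And>t. t \<in> uhp \<Longrightarrow> of_int c * t + of_int d \<noteq> 0" using Dnz[OF det] by blast
  have "F z \<tau> \<nu> \<alpha> = 0"
  proof (rule IL[where F=F and z=z and \<nu>=\<nu> and \<alpha>=\<alpha>, OF _ _ _ _ _ \<tau>])
    fix z :: "complex^'n" and \<tau> \<alpha> assume \<tau>: "\<tau> \<in> uhp"
    show "(\<lambda>\<nu>. F z \<tau> \<nu> \<alpha>) holomorphic_on UNIV"
      unfolding F_def by (intro hrules Pf_holo)
  next
    fix z :: "complex^'n" and \<tau> \<nu> \<alpha> l assume \<tau>: "\<tau> \<in> uhp"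
    show "(\<lambda>x. F z \<tau> \<nu> (upd \<alpha> l x)) holomorphic_on UNIV"
      unfolding F_def by (intro hrules Pf_holo)
  next
    fix z :: "complex^'n" and \<nu> \<alpha>
    show "(\<lambda>\<tau>. F z \<tau> \<nu> \<alpha>) holomorphic_on uhp"
      unfolding F_def
      by (intro hrules Pf_holo coef_holo[OF ah uhp_open] holomorphic_on_divide holomorphic_on_power_int
          mob_uhp[OF det] | simp add: nz)+
  next
    fix z :: "complex^'n" and \<tau> \<nu> \<alpha> l assume \<tau>: "\<tau> \<in> uhp"
    show "(\<lambda>w. F (upd z l w) \<tau> \<nu> \<alpha>) holomorphic_on UNIV"
      unfolding F_def
      by (intro hrules Pf_holo coef_holo[OF ah open_UNIV] holomorphic_on_divide | simp add: \<tau> nz mob_uhp[OF det])+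
  next
    fix z :: "complex^'n" and \<tau> assume \<tau>: "\<tau> \<in> uhp"
    have "(\<chi> l. (of_int c * \<tau> + of_int d) * complex_of_real (alphaf z \<tau> l) - of_int c * z$l) =
        (\<chi> l. complex_of_real (alphaf (\<chi> l. z$l / (of_int c * \<tau> + of_int d)) ((of_int a * \<tau> + of_int b) / (of_int c * \<tau> + of_int d)) l))"
      by (simp add: vec_eq_iff alphaf_mob[OF det \<tau>])
    moreover note nuf_mob[OF det \<tau>, symmetric]
    moreover have "feval \<Phi> (\<chi> l. z$l / (of_int c * \<tau> + of_int d)) ((of_int a * \<tau> + of_int b) / (of_int c * \<tau> + of_int d))
        = (of_int c * \<tau> + of_int d) powi k * ee (of_int c * bil L z z / (of_int c * \<tau> + of_int d)) * feval \<Phi> z \<tau>"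
      using ah \<tau> det unfolding ahwjf_def by blast
    ultimately show "F z \<tau> (of_real (nuf \<tau>)) (\<chi> l. of_real (alphaf z \<tau> l)) = 0"
      unfolding F_def feval_Pf by simp
  qed
  then show ?thesis unfolding F_def right_minus_eq .
qed



definition Qf :: "('n::finite) family \<Rightarrow> 'n \<Rightarrow> complex^'n \<Rightarrow> complex \<Rightarrow> complex \<Rightarrow> complex^'n \<Rightarrow> complex" where
  "Qf \<Phi> l z \<tau> \<nu> \<alpha> = (\<Sum>(i, j)\<in>fsupp \<Phi>. \<Phi> i j z \<tau> * \<nu> ^ i *
      (of_nat (j l) * (\<alpha>$l) ^ (j l - 1) * (\<Prod>l'\<in>UNIV-{l}. (\<alpha>$l') ^ j l')))"

lemma prod_upd:
  fixes \<alpha> :: "complex^'n::finite"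
  shows "(\<Prod>l'\<in>UNIV. (upd \<alpha> l x $ l') ^ j l') = x ^ j l * (\<Prod>l'\<in>UNIV-{l}. (\<alpha>$l') ^ j l')"
proof -
  have "(\<Prod>l'\<in>UNIV. (upd \<alpha> l x $ l') ^ j l') = (upd \<alpha> l x $ l) ^ j l * (\<Prod>l'\<in>UNIV-{l}. (upd \<alpha> l x $ l') ^ j l')"
    by (rule prod.remove) auto
  also have "(\<Prod>l'\<in>UNIV-{l}. (upd \<alpha> l x $ l') ^ j l') = (\<Prod>l'\<in>UNIV-{l}. (\<alpha>$l') ^ j l')"
    by (rule prod.cong) auto
  finally show ?thesis by simp
qed

lemma prod_upd2:
  fixes \<alpha> :: "complex^'n::finite"
  shows "(\<Prod>l'\<in>UNIV-{l}. (upd \<alpha> l x $ l') ^ j l') = (\<Prod>l'\<in>UNIV-{l}. (\<alpha>$l') ^ j l')"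
  by (rule prod.cong) auto

lemma Pf_deriv:
  fixes \<Phi> :: "('n::finite) family"
  shows "((\<lambda>x. Pf \<Phi> z \<tau> \<nu> (upd \<alpha> l x)) has_field_derivative Qf \<Phi> l z \<tau> \<nu> (upd \<alpha> l x)) (at x)"
  unfolding Pf_def Qf_def case_prod_unfold prod_upd prod_upd2
proof (rule DERIV_sum)
  fix p :: "nat \<times> ('n \<Rightarrow> nat)"
  define C where "C = \<Phi> (fst p) (snd p) z \<tau> * \<nu> ^ fst p"
  define K where "K = (\<Prod>l'\<in>UNIV-{l}. (\<alpha>$l') ^ snd p l')"
  have "((\<lambda>x. C * (x ^ snd p l * K)) has_field_derivative C * (of_nat (snd p l) * (1 * x ^ (snd p l - Suc 0)) * K)) (at x)"
    by (intro DERIV_cmult DERIV_cmult_right DERIV_power DERIV_ident)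
  then show "((\<lambda>x. \<Phi> (fst p) (snd p) z \<tau> * \<nu> ^ fst p * (x ^ snd p l * (\<Prod>l'\<in>UNIV-{l}. (\<alpha>$l') ^ snd p l'))) has_field_derivative
       \<Phi> (fst p) (snd p) z \<tau> * \<nu> ^ fst p * (of_nat (snd p l) * upd \<alpha> l x $ l ^ (snd p l - 1) * (\<Prod>l'\<in>UNIV-{l}. (\<alpha>$l') ^ snd p l'))) (at x)"
    by (simp add: C_def K_def mult.assoc)
qed

lemma Q_transfer:
  fixes \<Phi> :: "('n::finite) family"
  assumes H: "\<And>\<alpha>. Pf \<Phi> z1 \<tau>1 \<nu>1 (\<chi> l'. s * \<alpha>$l' + t$l') = K * Pf \<Phi> z \<tau> \<nu> \<alpha>"
  shows "Qf \<Phi> l z1 \<tau>1 \<nu>1 (\<chi> l'. s * \<alpha>$l' + t$l') * s = K * Qf \<Phi> l z \<tau> \<nu> \<alpha>"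
proof -
  define \<beta> where "\<beta> = (\<chi> l'. s * \<alpha>$l' + t$l')"
  have eqf: "(\<lambda>y. Pf \<Phi> z1 \<tau>1 \<nu>1 (upd \<beta> l (s * y + t$l))) = (\<lambda>y. K * Pf \<Phi> z \<tau> \<nu> (upd \<alpha> l y))"
  proof
    fix y
    have "upd \<beta> l (s * y + t$l) = (\<chi> l'. s * upd \<alpha> l y $ l' + t$l')"
      by (simp add: \<beta>_def vec_eq_iff upd_nth)
    then show "Pf \<Phi> z1 \<tau>1 \<nu>1 (upd \<beta> l (s * y + t$l)) = K * Pf \<Phi> z \<tau> \<nu> (upd \<alpha> l y)"
      using H by simp
  qed
  have d1: "((\<lambda>y. Pf \<Phi> z1 \<tau>1 \<nu>1 (upd \<beta> l (s * y + t$l))) has_field_derivative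
      Qf \<Phi> l z1 \<tau>1 \<nu>1 (upd \<beta> l (s * \<alpha>$l + t$l)) * (s * 1 + 0)) (at (\<alpha>$l))"
    by (rule DERIV_chain2[OF Pf_deriv]) (intro DERIV_add DERIV_cmult DERIV_ident DERIV_const)
  have d2: "((\<lambda>y. K * Pf \<Phi> z \<tau> \<nu> (upd \<alpha> l y)) has_field_derivative K * Qf \<Phi> l z \<tau> \<nu> (upd \<alpha> l (\<alpha>$l))) (at (\<alpha>$l))"
    by (intro DERIV_cmult Pf_deriv)
  have "Qf \<Phi> l z1 \<tau>1 \<nu>1 (upd \<beta> l (s * \<alpha>$l + t$l)) * (s * 1 + 0) = K * Qf \<Phi> l z \<tau> \<nu> (upd \<alpha> l (\<alpha>$l))"
    using DERIV_unique[OF d1] d2 eqf by metis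
  moreover have "upd \<beta> l (s * \<alpha>$l + t$l) = \<beta>" by (simp add: \<beta>_def vec_eq_iff upd_nth)
  ultimately show ?thesis by (simp add: \<beta>_def)
qed

lemma Q0:
  fixes \<Phi> :: "('n::finite) family"
  assumes "\<Phi> 0 ((\<lambda>_. 0)(l := 1)) z \<tau> = 0"
  shows "Qf \<Phi> l z \<tau> 0 0 = 0"
  unfolding Qf_def
proof (rule sum.neutral, safe)
  fix i j assume "(i, j) \<in> fsupp \<Phi>"
  show "\<Phi> i j z \<tau> * 0 ^ i * (of_nat (j l) * (0 $ l) ^ (j l - 1) * (\<Prod>l'\<in>UNIV - {l}. (0 $ l') ^ j l')) = (0::complex)"
  proof (cases "i = 0 \<and> j l = 1 \<and> (\<forall>l'. l' \<noteq> l \<longrightarrow> j l' = 0)")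
    case True
    then have "j = (\<lambda>_. 0)(l := 1)" by auto
    then show ?thesis using True assms by simp
  next
    case False
    then consider "i \<noteq> 0" | "j l = 0" | "j l \<ge> 2" | l' where "l' \<noteq> l" "j l' \<noteq> 0"
      by fastforce
    then show ?thesis
    proof cases
      case 3 then show ?thesis by (simp add: power_0_left)
    next
      case 4
      then have "(\<Prod>l'\<in>UNIV - {l}. (0 $ l') ^ j l') = (0::complex)"
        by (intro prod_zero) auto
      then show ?thesis by simp
    qed auto
  qed
qed



definition pl :: "(complex \<Rightarrow> complex) \<Rightarrow> bool" where
  "pl f \<longleftrightarrow> (\<exists>p. \<forall>x. f x = poly p x)"

lemma pl_const: "pl (\<lambda>x. c)"
  unfolding pl_def by (rule exI[of _ "[:c:]"]) simp

lemma pl_id: "pl (\<lambda>x. x)"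
  unfolding pl_def by (rule exI[of _ "[:0, 1:]"]) simp

lemma pl_add: "pl f \<Longrightarrow> pl g \<Longrightarrow> pl (\<lambda>x. f x + g x)"
  unfolding pl_def by (metis poly_add)

lemma pl_mult: "pl f \<Longrightarrow> pl g \<Longrightarrow> pl (\<lambda>x. f x * g x)"
  unfolding pl_def by (metis poly_mult)

lemma pl_power: "pl f \<Longrightarrow> pl (\<lambda>x. f x ^ n)"
  by (induction n) (auto intro: pl_const pl_mult)

lemma pl_sum: "finite S \<Longrightarrow> (\<And>i. i \<in> S \<Longrightarrow> pl (\<lambda>x. f x i)) \<Longrightarrow> pl (\<lambda>x. \<Sum>i\<in>S. f x i)"
  by (induction S rule: finite_induct) (auto intro: pl_const pl_add)

lemma pl_prod: "finite S \<Longrightarrow> (\<And>i. i \<in> S \<Longrightarrow> pl (\<lambda>x. f x i)) \<Longrightarrow> pl (\<lambda>x. \<Prod>i\<in>S. f x i)"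
  by (induction S rule: finite_induct) (auto intro: pl_const pl_mult)

lemma pl_upd: "pl (\<lambda>x. upd \<alpha> l x $ l')"
  by (cases "l' = l") (auto intro: pl_const pl_id)

lemma pl_zero:
  assumes "pl f" "infinite {x. f x = 0}"
  shows "f x = 0"
proof -
  obtain p where p: "\<And>x. f x = poly p x" using assms(1) unfolding pl_def by blast
  have "p = 0" using poly_roots_finite[of p] assms(2) unfolding p by blast
  then show ?thesis using p by simp
qed

lemma grid_zero:
  fixes G :: "complex^'n::finite \<Rightarrow> complex"
  assumes pol: "\<And>\<alpha> l. pl (\<lambda>x. G (upd \<alpha> l x))" and s: "s \<noteq> 0"
    and Z: "\<And>v::int^'n. G (\<chi> l. p$l + s * of_int (v$l)) = 0"
  shows "G \<alpha> = 0"
proof -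
  have "\<forall>\<alpha>. (\<forall>l. l \<notin> S \<longrightarrow> (\<exists>k::int. \<alpha>$l = p$l + s * of_int k)) \<longrightarrow> G \<alpha> = 0" if "finite S" for S :: "'n set"
    using that
  proof (induction S rule: finite_induct)
    case empty
    show ?case
    proof (intro allI impI)
      fix \<alpha> :: "complex^'n" assume "\<forall>l. l \<notin> {} \<longrightarrow> (\<exists>k::int. \<alpha>$l = p$l + s * of_int k)"
      then have "\<forall>l. \<exists>k::int. \<alpha>$l = p$l + s * of_int k" by blast
      then obtain kf where kf: "\<And>l. \<alpha>$l = p$l + s * of_int (kf l)" by metis
      have "\<alpha> = (\<chi> l. p$l + s * of_int ((\<chi> l. kf l) $ l))" by (simp add: vec_eq_iff kf)
      then show "G \<alpha> = 0" using Z by metis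
    qed
  next
    case (insert l S)
    show ?case
    proof (intro allI impI)
      fix \<alpha> :: "complex^'n" assume as: "\<forall>l'. l' \<notin> insert l S \<longrightarrow> (\<exists>k::int. \<alpha>$l' = p$l' + s * of_int k)"
      have sub: "(\<lambda>k::int. p$l + s * of_int k) ` UNIV \<subseteq> {x. G (upd \<alpha> l x) = 0}"
      proof clarify
        fix k :: int
        have "\<forall>l'. l' \<notin> S \<longrightarrow> (\<exists>k'::int. upd \<alpha> l (p$l + s * of_int k) $ l' = p$l' + s * of_int k')"
          using as by (auto simp: upd_nth)
        then show "G (upd \<alpha> l (p$l + s * of_int k)) = 0" using insert.IH by blast
      qed
      have "inj (\<lambda>k::int. p$l + s * of_int k)" using s by (auto simp: inj_on_def)
      then have "infinite ((\<lambda>k::int. p$l + s * of_int k) ` UNIV)"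
        using finite_imageD infinite_UNIV_int by blast
      then have "infinite {x. G (upd \<alpha> l x) = 0}" using sub finite_subset by blast
      from pl_zero[OF pol this, of "\<alpha>$l"] show "G \<alpha> = 0" by simp
    qed
  qed
  from this[of UNIV] show ?thesis by simp
qed

lemma Qf_pl:
  fixes \<Phi> :: "('n::finite) family"
  assumes "finite (fsupp \<Phi>)"
  shows "pl (\<lambda>x. Qf \<Phi> l z \<tau> \<nu> (upd \<alpha> l' x))"
  unfolding Qf_def case_prod_unfold
  by (intro pl_sum pl_mult pl_const pl_power pl_prod pl_upd assms finite)

lemma Qf_holo_nu:
  fixes \<Phi> :: "('n::finite) family"
  shows "(\<lambda>\<nu>. Qf \<Phi> l z \<tau> \<nu> \<alpha>) holomorphic_on UNIV"
  unfolding Qf_def case_prod_unfold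
  by (intro holomorphic_on_sum holomorphic_on_mult holomorphic_on_const holomorphic_on_power holomorphic_on_ident)



lemma ee_nz: "ee x \<noteq> 0" by (simp add: ee_def)

lemma N_zero: "X \<noteq> 0 \<Longrightarrow> X^2 * (- 1 / (4 * of_real pi * \<i> * X)) + of_int 1 * X / (4 * of_real pi * \<i>) = (0::complex)"
  by (simp add: field_simps power2_eq_square)

lemma scal_id:
  fixes X \<tau> dd z v :: complex
  assumes "X \<noteq> 0" "X = \<tau> + dd"
  shows "1 * (z / X + (- dd / X) * v) + v = (z + v * \<tau> + 0) / X"
proof -
  have "1 * (z / X + (- dd / X) * v) + v = (z - dd * v + X * v) / X" using assms(1) by (simp add: field_simps)
  also have "z - dd * v + X * v = z + v * \<tau> + 0" using assms(2) by (simp add: algebra_simps)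
  finally show ?thesis .
qed

lemma Qzero:
  fixes \<Phi> :: "('n::finite) family"
  assumes ah: "ahwjf k L \<Phi>" and h0: "\<And>z \<tau>. \<tau> \<in> uhp \<Longrightarrow> \<Phi> 0 ((\<lambda>_. 0)(l := 1)) z \<tau> = 0"
    and \<tau>: "\<tau> \<in> uhp"
  shows "Qf \<Phi> l z \<tau> \<nu> \<alpha> = 0"
proof -
  have fin: "finite (fsupp \<Phi>)" using ah by (simp add: ahwjf_def)
  define Dd where "Dd = (\<lambda>d::nat. of_int 1 * \<tau> + of_int (int d) :: complex)"
  define nd where "nd = (\<lambda>d::nat. - 1 / (4 * of_real pi * \<i> * Dd d))"
  have Dnz': "Dd d \<noteq> 0" for d using Dnz[of 1 "int d" "int d - 1" 1, OF _ \<tau>] by (simp add: Dd_def)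
  have A: "Qf \<Phi> l z' \<tau> (nd d) (\<chi> m. z'$m / Dd d) = 0" for z' d
  proof -
    have det: "1 * int d - (int d - 1) * 1 = (1::int)" by simp
    define t where "t = (\<chi> m. - (of_int 1 * z'$m :: complex))"
    define N where "N = (of_int 1 * \<tau> + of_int (int d))^2 * nd d + of_int 1 * (of_int 1 * \<tau> + of_int (int d)) / (4 * of_real pi * \<i>)"
    define K where "K = (of_int 1 * \<tau> + of_int (int d)) powi k * ee (of_int 1 * bil L z' z' / (of_int 1 * \<tau> + of_int (int d)))"
    have H: "Pf \<Phi> (\<chi> l. z'$l / (of_int 1 * \<tau> + of_int (int d))) ((of_int 1 * \<tau> + of_int (int d - 1)) / (of_int 1 * \<tau> + of_int (int d)))
       N (\<chi> l'. Dd d * \<alpha>$l' + t$l') = K * Pf \<Phi> z' \<tau> (nd d) \<alpha>" for \<alpha>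
    proof -
      have "(\<chi> l'. Dd d * \<alpha>$l' + t$l') = (\<chi> l. (of_int 1 * \<tau> + of_int (int d)) * \<alpha>$l - of_int 1 * z'$l)"
        by (simp add: vec_eq_iff t_def Dd_def)
      then show ?thesis using modular_poly[OF ah det \<tau>, of z' "nd d" \<alpha>] unfolding N_def K_def by simp
    qed
    note QT = Q_transfer[OF H, of l "\<chi> m. z'$m / Dd d"]
    have N0: "N = 0" using N_zero[OF Dnz'[of d]] unfolding N_def nd_def Dd_def .
    have z0: "(\<chi> l'. Dd d * (\<chi> m. z'$m / Dd d)$l' + t$l') = 0"
      using Dnz'[of d] by (simp add: vec_eq_iff t_def)
    have "(of_int 1 * \<tau> + of_int (int d - 1)) / (of_int 1 * \<tau> + of_int (int d)) \<in> uhp"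
      by (rule mob_uhp[OF det \<tau>])
    then have "Qf \<Phi> l (\<chi> l. z'$l / (of_int 1 * \<tau> + of_int (int d))) ((of_int 1 * \<tau> + of_int (int d - 1)) / (of_int 1 * \<tau> + of_int (int d))) 0 0 = 0"
      by (intro Q0 h0)
    then have "K * Qf \<Phi> l z' \<tau> (nd d) (\<chi> m. z'$m / Dd d) = 0" using QT N0 z0 by simp
    moreover have "K \<noteq> 0" using Dnz'[of d] unfolding K_def Dd_def by (simp add: ee_nz)
    ultimately show ?thesis by simp
  qed
  have B: "Qf \<Phi> l z \<tau> (nd d) (\<chi> m. (\<chi> m. z$m / Dd d)$m + (- of_nat d / Dd d) * of_int (v$m)) = 0" for d v
  proof -
    define t where "t = (\<chi> m. (of_int (v$m) :: complex))"
    define E where "E = ee (- bil L (ivec v) (ivec v) * \<tau> - 2 * bil L (ivec v) z)"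
    define z1 where "z1 = (\<chi> l. z$l + of_int (v$l) * \<tau> + of_int ((0::int^'n)$l))"
    have H: "Pf \<Phi> z1 \<tau> (nd d) (\<chi> l'. 1 * \<alpha>$l' + t$l') = E * Pf \<Phi> z \<tau> (nd d) \<alpha>" for \<alpha>
      using elliptic_poly[OF ah \<tau>, of z v 0 "nd d" \<alpha>] by (simp add: t_def E_def z1_def)
    define \<alpha>0 where "\<alpha>0 = (\<chi> m. (\<chi> m. z$m / Dd d)$m + (- of_nat d / Dd d) * of_int (v$m))"
    note QT = Q_transfer[OF H, of l \<alpha>0]
    have "(\<chi> l'. 1 * \<alpha>0$l' + t$l') = (\<chi> m. z1$m / Dd d)"
    proof -
      have D: "Dd d = \<tau> + of_nat d" by (simp add: Dd_def)
      show ?thesis unfolding vec_eq_iff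
      proof
        fix m
        show "(\<chi> l'. 1 * \<alpha>0$l' + t$l') $ m = (\<chi> m. z1$m / Dd d) $ m"
          using scal_id[OF Dnz'[of d] D, of "z$m" "of_int (v$m)"] by (simp add: \<alpha>0_def t_def z1_def)
      qed
    qed
    then have "E * Qf \<Phi> l z \<tau> (nd d) \<alpha>0 = 0" using QT A[of z1 d] by simp
    then show ?thesis using ee_nz by (simp add: E_def \<alpha>0_def)
  qed
  have C: "Qf \<Phi> l z \<tau> (nd d) \<alpha> = 0" if d: "d \<ge> 1" for d \<alpha>
  proof (rule grid_zero[where G="Qf \<Phi> l z \<tau> (nd d)"])
    show "pl (\<lambda>x. Qf \<Phi> l z \<tau> (nd d) (upd \<alpha> l' x))" for \<alpha> l' by (rule Qf_pl[OF fin])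
    show "- of_nat d / Dd d \<noteq> 0" using d Dnz'[of d] by simp
    show "Qf \<Phi> l z \<tau> (nd d) (\<chi> m. (\<chi> m. z$m / Dd d)$m + (- of_nat d / Dd d) * of_int (v$m)) = 0" for v
      by (rule B)
  qed
  show ?thesis
  proof (rule analytic_continuation[OF Qf_holo_nu open_UNIV connected_UNIV subset_UNIV UNIV_I])
    show "0 islimpt (nd ` {1..})"
      unfolding islimpt_approachable
    proof (intro allI impI)
      fix e :: real assume e: "e > 0"
      obtain d :: nat where dgt: "real d > cmod \<tau> + 1 / e" using reals_Archimedean2 by blast
      have pos: "0 < cmod \<tau> + 1 / e" using e by (simp add: add_nonneg_pos)
      have "real d > 0" using dgt pos by linarith
      then have "0 < d" by simp
      then have d1: "d \<ge> 1" by simp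
      have "cmod (Dd d) \<ge> real d - cmod \<tau>"
      proof -
        have "real d = cmod (of_nat d :: complex)" by simp
        also have "\<dots> \<le> cmod (Dd d) + cmod \<tau>" unfolding Dd_def
          using norm_triangle_ineq4[of "\<tau> + of_nat d" \<tau>] by (simp add: norm_minus_commute)
        finally show ?thesis by simp
      qed
      then have big: "cmod (Dd d) > 1 / e" using dgt by linarith
      have "cmod (nd d) = 1 / (4 * pi * cmod (Dd d))"
        by (simp add: nd_def norm_divide norm_mult)
      also have "\<dots> < e"
      proof -
        have "0 < 1 / e" using e by simp
        then have X: "cmod (Dd d) > 0" using big by linarith
        have X2: "1 * cmod (Dd d) \<le> (4 * pi) * cmod (Dd d)" by (rule mult_right_mono) (use pi_gt3 X in auto)
        have "1 / (4 * pi * cmod (Dd d)) \<le> 1 / cmod (Dd d)"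
          using X X2 pi_gt3 by (intro divide_left_mono) auto
        also have "1 / cmod (Dd d) < e" using big e X by (simp add: divide_less_eq mult.commute)
        finally show ?thesis .
      qed
      finally have "cmod (nd d) < e" .
      moreover have "nd d \<noteq> 0" using Dnz'[of d] by (simp add: nd_def)
      ultimately show "\<exists>x'\<in>nd ` {1..}. x' \<noteq> 0 \<and> dist x' 0 < e"
        using d1 by (intro bexI[of _ "nd d"]) auto
    qed
    show "\<And>x. x \<in> nd ` {1..} \<Longrightarrow> Qf \<Phi> l z \<tau> x \<alpha> = 0" using C by auto
  qed (rule UNIV_I)
qed



lemma Pf_indep:
  fixes \<Phi> :: "('n::finite) family"
  assumes Q: "\<And>l \<alpha> \<nu>. Qf \<Phi> l z \<tau> \<nu> \<alpha> = 0"
  shows "Pf \<Phi> z \<tau> \<nu> \<alpha> = Pf \<Phi> z \<tau> \<nu> 0"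
proof -
  have "\<forall>\<alpha>. (\<forall>l. l \<notin> S \<longrightarrow> \<alpha>$l = 0) \<longrightarrow> Pf \<Phi> z \<tau> \<nu> \<alpha> = Pf \<Phi> z \<tau> \<nu> 0" if "finite S" for S :: "'n set"
    using that
  proof (induction S rule: finite_induct)
    case empty
    show ?case
    proof (intro allI impI)
      fix \<alpha> :: "complex^'n" assume "\<forall>l. l \<notin> {} \<longrightarrow> \<alpha>$l = 0"
      then have "\<alpha> = 0" by (simp add: vec_eq_iff)
      then show "Pf \<Phi> z \<tau> \<nu> \<alpha> = Pf \<Phi> z \<tau> \<nu> 0" by simp
    qed
  next
    case (insert l S)
    show ?case
    proof (intro allI impI)
      fix \<alpha> :: "complex^'n" assume as: "\<forall>l'. l' \<notin> insert l S \<longrightarrow> \<alpha>$l' = 0"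
      have dv: "((\<lambda>x. Pf \<Phi> z \<tau> \<nu> (upd \<alpha> l x)) has_field_derivative 0) (at x within UNIV)" for x
        using Pf_deriv[of \<Phi> z \<tau> \<nu> \<alpha> l x] unfolding Q by simp
      have "\<exists>c. \<forall>x\<in>UNIV. Pf \<Phi> z \<tau> \<nu> (upd \<alpha> l x) = c"
        by (rule has_field_derivative_zero_constant[OF convex_UNIV dv])
      then obtain c where c: "\<And>x. Pf \<Phi> z \<tau> \<nu> (upd \<alpha> l x) = c" by blast
      have "Pf \<Phi> z \<tau> \<nu> \<alpha> = Pf \<Phi> z \<tau> \<nu> (upd \<alpha> l 0)" using c[of "\<alpha>$l"] c[of 0] by simp
      also have "\<dots> = Pf \<Phi> z \<tau> \<nu> 0"
      proof -
        have "\<forall>l'. l' \<notin> S \<longrightarrow> upd \<alpha> l 0 $ l' = 0" using as by (simp add: upd_nth)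
        then show ?thesis using insert.IH by blast
      qed
      finally show "Pf \<Phi> z \<tau> \<nu> \<alpha> = Pf \<Phi> z \<tau> \<nu> 0" .
    qed
  qed
  from this[of UNIV] show ?thesis by simp
qed

lemma dnu_pow: "(dnu ^^ m) \<Phi> i j z \<tau> = pochhammer (of_nat (i + 1)) m * \<Phi> (i + m) j z \<tau>"
proof (induction m arbitrary: i)
  case 0
  then show ?case by simp
next
  case (Suc m)
  have "(dnu ^^ Suc m) \<Phi> i j z \<tau> = of_nat (i + 1) * (dnu ^^ m) \<Phi> (i + 1) j z \<tau>"
    by (simp add: dnu_def)
  also have "\<dots> = of_nat (i + 1) * (pochhammer (of_nat (i + 2)) m * \<Phi> (i + 1 + m) j z \<tau>)"
    using Suc.IH[of "i + 1"] by simp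
  also have "\<dots> = pochhammer (of_nat (i + 1)) (Suc m) * \<Phi> (i + Suc m) j z \<tau>"
    by (simp add: pochhammer_rec add_ac)
  finally show ?case .
qed

lemma Tq_pow_eq: "Tq_pow m \<Phi> z \<tau> = of_nat (fact m) * \<Phi> m (\<lambda>_. 0) z \<tau>"
  unfolding Tq_pow_def cterm_def dnu_pow by (simp add: pochhammer_fact[symmetric])

lemma prod_zero_pow:
  fixes j :: "'n::finite \<Rightarrow> nat"
  shows "(\<Prod>l\<in>UNIV. (0::complex) ^ j l) = (if j = (\<lambda>_. 0) then 1 else 0)"
proof (cases "j = (\<lambda>_. 0)")
  case False
  then obtain l where "j l \<noteq> 0" by auto
  then have "(\<Prod>l\<in>UNIV. (0::complex) ^ j l) = 0" by (intro prod_zero) auto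
  then show ?thesis using False by simp
qed simp

lemma Pf_zero:
  fixes \<Phi> :: "('n::finite) family"
  assumes fin: "finite (fsupp \<Phi>)" and \<tau>: "\<tau> \<in> uhp"
  shows "Pf \<Phi> z \<tau> \<nu> 0 = (\<Sum>m\<in>{m. (m, \<lambda>_. 0) \<in> fsupp \<Phi>}. \<Phi> m (\<lambda>_. 0) z \<tau> * \<nu> ^ m)"
proof -
  have "Pf \<Phi> z \<tau> \<nu> 0 = (\<Sum>p\<in>fsupp \<Phi>. if snd p = (\<lambda>_. 0) then \<Phi> (fst p) (\<lambda>_. 0) z \<tau> * \<nu> ^ fst p else 0)"
    unfolding Pf_def case_prod_unfold by (intro sum.cong) (auto simp: prod_zero_pow)
  also have "\<dots> = (\<Sum>p\<in>{p\<in>fsupp \<Phi>. snd p = (\<lambda>_. 0)}. \<Phi> (fst p) (\<lambda>_. 0) z \<tau> * \<nu> ^ fst p)"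
    by (rule sum.inter_filter[symmetric]) (rule fin)
  also have "{p\<in>fsupp \<Phi>. snd p = (\<lambda>_. 0)} = (\<lambda>m. (m, \<lambda>_. 0)) ` {m. (m, \<lambda>_. 0) \<in> fsupp \<Phi>}"
    by auto
  also have "(\<Sum>p\<in>(\<lambda>m. (m, \<lambda>_. 0)) ` {m. (m, \<lambda>_. 0) \<in> fsupp \<Phi>}. \<Phi> (fst p) (\<lambda>_. 0) z \<tau> * \<nu> ^ fst p)
      = (\<Sum>m\<in>{m. (m, \<lambda>_. 0) \<in> fsupp \<Phi>}. \<Phi> m (\<lambda>_. 0) z \<tau> * \<nu> ^ m)"
    by (subst sum.reindex) (auto simp: inj_on_def)
  finally show ?thesis .
qed

lemma finM0: "finite (fsupp \<Phi>) \<Longrightarrow> finite {m. (m, \<lambda>_. 0) \<in> fsupp \<Phi>}"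
proof -
  assume fin: "finite (fsupp \<Phi>)"
  have "{m. (m, \<lambda>_. 0) \<in> fsupp \<Phi>} \<subseteq> fst ` fsupp \<Phi>"
  proof
    fix m assume "m \<in> {m. (m, \<lambda>_. 0) \<in> fsupp \<Phi>}"
    then have "(m, \<lambda>_. 0) \<in> fsupp \<Phi>" by simp
    from imageI[OF this, of fst] show "m \<in> fst ` fsupp \<Phi>" by simp
  qed
  then show ?thesis using fin finite_subset by blast
qed

lemma Pf_zero0:
  fixes \<Phi> :: "('n::finite) family"
  assumes fin: "finite (fsupp \<Phi>)" and \<tau>: "\<tau> \<in> uhp"
  shows "Pf \<Phi> z \<tau> 0 0 = \<Phi> 0 (\<lambda>_. 0) z \<tau>"
proof -
  have "Pf \<Phi> z \<tau> 0 0 = (\<Sum>m\<in>{m. (m, \<lambda>_. 0) \<in> fsupp \<Phi>}. \<Phi> m (\<lambda>_. 0) z \<tau> * 0 ^ m)"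
    by (rule Pf_zero[OF fin \<tau>])
  also have "\<dots> = (\<Sum>m\<in>{m. (m, \<lambda>_. 0) \<in> fsupp \<Phi>}. if m = 0 then \<Phi> 0 (\<lambda>_. 0) z \<tau> else 0)"
    by (intro sum.cong) auto
  also have "\<dots> = (if (0::nat) \<in> {m. (m, \<lambda>_. 0) \<in> fsupp \<Phi>} then \<Phi> 0 (\<lambda>_. 0) z \<tau> else 0)"
    by (rule sum.delta[OF finM0[OF fin]])
  also have "\<dots> = \<Phi> 0 (\<lambda>_. 0) z \<tau>"
  proof (cases "(0::nat) \<in> {m. (m, \<lambda>_. 0) \<in> fsupp \<Phi>}")
    case False
    then have "\<Phi> 0 (\<lambda>_. 0) z \<tau> = 0" using \<tau> unfolding fsupp_def by blast
    then show ?thesis using False by simp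
  qed simp
  finally show ?thesis .
qed



lemma N_zero2: "X \<noteq> 0 \<Longrightarrow> X^2 * (- c / (4 * of_real pi * \<i> * X)) + c * X / (4 * of_real pi * \<i>) = (0::complex)"
  by (simp add: field_simps power2_eq_square)

lemma Tlam_unit:
  fixes \<Phi> :: "('n::finite) family"
  shows "Tlam (\<chi> m. if m = l then 1 else 0) \<Phi> z \<tau> = \<Phi> 0 ((\<lambda>_. 0)(l := 1)) z \<tau>"
proof -
  have "Tlam (\<chi> m. if m = l then 1 else 0) \<Phi> z \<tau> = (\<Sum>m\<in>UNIV. (if m = l then \<Phi> 0 ((\<lambda>_. 0)(m := 1)) z \<tau> else 0))"
    unfolding Tlam_def cterm_def dlambda_def dalpha_def by (intro sum.cong) auto
  also have "\<dots> = \<Phi> 0 ((\<lambda>_. 0)(l := 1)) z \<tau>" by simp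
  finally show ?thesis .
qed

theorem lemma4:
  fixes k :: int and L :: "real^'n^'n" and \<Phi> :: "('n::finite) family"
    and \<phi> :: "complex^'n \<Rightarrow> complex \<Rightarrow> complex"
  assumes "index_matrix L"
    and "qjac_completion k L \<Phi> \<phi>"
    and "\<forall>v::int^'n. \<forall>z. \<forall>\<tau>\<in>uhp. Tlam v \<Phi> z \<tau> = 0"
    and "a * d - b * c = (1::int)"
    and "\<tau> \<in> uhp"
  shows "\<phi> (\<chi> l. z$l / (of_int c * \<tau> + of_int d)) ((of_int a * \<tau> + of_int b) / (of_int c * \<tau> + of_int d))
     = ee (of_int c * bil L z z / (of_int c * \<tau> + of_int d)) *
       infsum (\<lambda>m::nat. (1 / of_nat (fact m)) * (- of_int c / (4 * of_real pi * \<i>)) ^ m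
          * (of_int c * \<tau> + of_int d) powi (k - int m) * Tq_pow m \<Phi> z \<tau>) UNIV"
proof -
  have ah: "ahwjf k L \<Phi>" and ct: "cterm \<Phi> = \<phi>" using assms(2) by (auto simp: qjac_completion_def)
  have det: "a * d - b * c = (1::int)" and \<tau>: "\<tau> \<in> uhp" using assms(4,5) by auto
  have fin: "finite (fsupp \<Phi>)" using ah by (simp add: ahwjf_def)
  have h0: "\<Phi> 0 ((\<lambda>_. 0)(l := 1)) z' \<tau>' = 0" if "\<tau>' \<in> uhp" for l z' \<tau>'
    using assms(3) that Tlam_unit[of l \<Phi> z' \<tau>'] by metis
  have Qz: "Qf \<Phi> l z \<tau> \<nu> \<alpha> = 0" for l \<nu> \<alpha>
    by (rule Qzero[OF ah _ \<tau>]) (rule h0)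
  define D where "D = of_int c * \<tau> + of_int d"
  have Dn: "D \<noteq> 0" unfolding D_def by (rule Dnz[OF det \<tau>])
  define \<nu>' where "\<nu>' = - of_int c / (4 * of_real pi * \<i> * D)"
  define \<alpha>' where "\<alpha>' = (\<chi> m. of_int c * z$m / D)"
  define K where "K = D powi k * ee (of_int c * bil L z z / D)"
  define M0 where "M0 = {m. (m, \<lambda>_. 0) \<in> fsupp \<Phi>}"
  have N0: "D^2 * \<nu>' + of_int c * D / (4 * of_real pi * \<i>) = 0"
    unfolding \<nu>'_def by (rule N_zero2[OF Dn])
  have A0: "(\<chi> l. D * \<alpha>'$l - of_int c * z$l) = 0"
    using Dn by (simp add: vec_eq_iff \<alpha>'_def)
  have MP: "Pf \<Phi> (\<chi> l. z$l / D) ((of_int a * \<tau> + of_int b) / D) 0 0 = K * Pf \<Phi> z \<tau> \<nu>' \<alpha>'"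
    using modular_poly[OF ah det \<tau>, of z \<nu>' \<alpha>'] N0 A0 unfolding D_def[symmetric] K_def by simp
  have "\<phi> (\<chi> l. z$l / D) ((of_int a * \<tau> + of_int b) / D) = Pf \<Phi> (\<chi> l. z$l / D) ((of_int a * \<tau> + of_int b) / D) 0 0"
    using Pf_zero0[OF fin mob_uhp[OF det \<tau>]] ct unfolding D_def cterm_def by simp
  also have "\<dots> = K * Pf \<Phi> z \<tau> \<nu>' 0" using MP Pf_indep[OF Qz] by simp
  also have "\<dots> = K * (\<Sum>m\<in>M0. \<Phi> m (\<lambda>_. 0) z \<tau> * \<nu>' ^ m)"
    unfolding M0_def by (simp add: Pf_zero[OF fin \<tau>])
  finally have L: "\<phi> (\<chi> l. z$l / D) ((of_int a * \<tau> + of_int b) / D) = K * (\<Sum>m\<in>M0. \<Phi> m (\<lambda>_. 0) z \<tau> * \<nu>' ^ m)" .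
  define T where "T = (\<lambda>m::nat. (1 / of_nat (fact m)) * (- of_int c / (4 * of_real pi * \<i>)) ^ m
          * D powi (k - int m) * Tq_pow m \<Phi> z \<tau>)"
  have Tm: "T m = D powi k * (\<Phi> m (\<lambda>_. 0) z \<tau> * \<nu>' ^ m)" for m
  proof -
    have f: "(of_nat (fact m) :: complex) \<noteq> 0" by simp
    have "D powi (k - int m) = D powi k / D ^ m" using Dn by (simp add: power_int_diff)
    define P where "P = - of_int c / (4 * of_real pi * \<i>)"
    have nu: "\<nu>' = P / D" unfolding \<nu>'_def P_def using Dn by simp
    have "T m = (1 / of_nat (fact m) * of_nat (fact m)) * P ^ m * (D powi k / D ^ m) * \<Phi> m (\<lambda>_. 0) z \<tau>"
      unfolding T_def Tq_pow_eq P_def[symmetric] \<open>D powi (k - int m) = D powi k / D ^ m\<close> by (simp only: mult_ac)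
    also have "\<dots> = D powi k * (\<Phi> m (\<lambda>_. 0) z \<tau> * (P / D) ^ m)"
      using f by (simp add: power_divide)
    finally show ?thesis unfolding nu .
  qed
  have "infsum T UNIV = infsum T M0"
  proof (rule infsum_cong_neutral)
    fix m assume "m \<in> UNIV - M0"
    then have "\<Phi> m (\<lambda>_. 0) z \<tau> = 0" using \<tau> unfolding M0_def fsupp_def by blast
    then show "T m = 0" by (simp add: Tm)
  qed auto
  also have "\<dots> = sum T M0" using finM0[OF fin] by (simp add: M0_def)
  also have "\<dots> = D powi k * (\<Sum>m\<in>M0. \<Phi> m (\<lambda>_. 0) z \<tau> * \<nu>' ^ m)"
    by (simp add: Tm sum_distrib_left)
  finally have R: "infsum T UNIV = D powi k * (\<Sum>m\<in>M0. \<Phi> m (\<lambda>_. 0) z \<tau> * \<nu>' ^ m)" .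
  show ?thesis
    using L R unfolding D_def[symmetric] T_def[symmetric] K_def by (simp add: mult_ac)
qed

end
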